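(* Fix $R\in[1,\infty]$, $\theta\in\mathbb R$ and $\lambda>0$. Then $F^c_R\big[e^{i\theta}\lambda^{1/2}W(\lambda\,\cdot)\big]=0$.
   Context: $W(x)=(1+\tfrac{|x|^2}{3})^{-1/2}$ on $\mathbb R^3$ is the ground state, solving $-\Delta W=W^5$. Let $\phi$ be a fixed smooth radial function on $\mathbb R^3$ with $\phi(x)=|x|^2$ for $|x|\le1$, $\phi(x)=0$ for $|x|\ge2$, and $|\partial^\alpha\phi(x)|\lesssim|x|^{2-|\alpha|}$ for all multi-indices $\alpha$; for $R\ge1$ set $w_R(x)=R^2\phi(x/R)$. For $R\in[1,\infty)$ and $u\in\dot H^1(\mathbb R^3)$ define \[ F^c_R[u]=\int_{\mathbb R^3}\Big\{(-\Delta\Delta w_R)|u|^2+4\,\mathrm{Re}\,\overline{\partial_j u}\,\partial_k u\,\partial_{jk}w_R-\tfrac43\Delta w_R\,|u|^6\Big\}dx \] (summation over $j,k$), and for $R=\infty$ set $F^c_\infty[u]=8\big(\|\nabla u\|_{L^2}^2-\|u\|_{L^6}^6\big)$. *)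

theory Defs
  imports "HOL-Analysis.Analysis" "HOL-Library.Extended_Real"
begin

type_synonym R3 = "real^3"

definition pd :: "3 \<Rightarrow> (R3 \<Rightarrow> 'b::real_normed_vector) \<Rightarrow> R3 \<Rightarrow> 'b" where
  "pd j f x = vector_derivative (\<lambda>t. f (x + t *\<^sub>R axis j 1)) (at 0)"

fun pdl :: "3 list \<Rightarrow> (R3 \<Rightarrow> 'b::real_normed_vector) \<Rightarrow> R3 \<Rightarrow> 'b" where
  "pdl [] f = f"
| "pdl (j # js) f = pd j (pdl js f)"

definition smooth :: "(R3 \<Rightarrow> real) \<Rightarrow> bool" where
  "smooth f \<longleftrightarrow> (\<forall>js. continuous_on UNIV (pdl js f) \<and>
     (\<forall>j x. (\<lambda>t. pdl js f (x + t *\<^sub>R axis j 1)) differentiable (at 0)))"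

definition laplacian :: "(R3 \<Rightarrow> real) \<Rightarrow> R3 \<Rightarrow> real" where
  "laplacian f x = (\<Sum>j\<in>UNIV. pd j (pd j f) x)"

definition admissible_phi :: "(R3 \<Rightarrow> real) \<Rightarrow> bool" where
  "admissible_phi \<phi> \<longleftrightarrow> smooth \<phi>
     \<and> (\<forall>x y. norm x = norm y \<longrightarrow> \<phi> x = \<phi> y)
     \<and> (\<forall>x. norm x \<le> 1 \<longrightarrow> \<phi> x = (norm x)\<^sup>2)
     \<and> (\<forall>x. norm x \<ge> 2 \<longrightarrow> \<phi> x = 0)
     \<and> (\<forall>js. \<exists>C. \<forall>x. x \<noteq> 0 \<longrightarrow> \<bar>pdl js \<phi> x\<bar> \<le> C * norm x powr (2 - real (length js)))"

definition wR :: "(R3 \<Rightarrow> real) \<Rightarrow> real \<Rightarrow> R3 \<Rightarrow> real" where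
  "wR \<phi> R x = R\<^sup>2 * \<phi> ((1 / R) *\<^sub>R x)"

definition W :: "R3 \<Rightarrow> real" where
  "W x = (1 + (norm x)\<^sup>2 / 3) powr (-1/2)"

definition Fc :: "(R3 \<Rightarrow> real) \<Rightarrow> ereal \<Rightarrow> (R3 \<Rightarrow> complex) \<Rightarrow> real" where
  "Fc \<phi> R u =
    (if R = \<infinity> then
       8 * ((LINT x|lborel. (\<Sum>j\<in>UNIV. (cmod (pd j u x))\<^sup>2)) - (LINT x|lborel. cmod (u x) ^ 6))
     else
       (let w = wR \<phi> (real_of_ereal R) in
        LINT x|lborel.
          (- laplacian (laplacian w) x) * (cmod (u x))\<^sup>2
          + 4 * (\<Sum>j\<in>UNIV. \<Sum>k\<in>UNIV. Re (cnj (pd j u x) * pd k u x) * pd j (pd k w) x)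
          - 4/3 * laplacian w x * cmod (u x) ^ 6))"

end

theory Submission
  imports Defs
begin


definition hasd :: "3 \<Rightarrow> (R3 \<Rightarrow> real) \<Rightarrow> R3 \<Rightarrow> real \<Rightarrow> bool" where
  "hasd j f x D \<longleftrightarrow> ((\<lambda>t. f (x + t *\<^sub>R axis j 1)) has_real_derivative D) (at 0)"

lemma hasd_pd: "hasd j f x D \<Longrightarrow> pd j f x = D"
  unfolding hasd_def pd_def
  by (simp add: has_real_derivative_iff_has_vector_derivative vector_derivative_at)

lemma differentiable_hasd:
  assumes "(\<lambda>t. f (x + t *\<^sub>R axis j 1)) differentiable (at 0)"
  shows "hasd j f x (pd j f x)"
  using assms unfolding hasd_def pd_def
  by (simp add: has_real_derivative_iff_has_vector_derivative vector_derivative_works[symmetric])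

lemma hasd_differentiable: "hasd j f x D \<Longrightarrow> (\<lambda>t. f (x + t *\<^sub>R axis j 1)) differentiable (at 0)"
  unfolding hasd_def using real_differentiable_def by blast

lemma hasd_add: "hasd j f x A \<Longrightarrow> hasd j g x B \<Longrightarrow> hasd j (\<lambda>y. f y + g y) x (A + B)"
  unfolding hasd_def by (rule DERIV_add)

lemma hasd_diff: "hasd j f x A \<Longrightarrow> hasd j g x B \<Longrightarrow> hasd j (\<lambda>y. f y - g y) x (A - B)"
  unfolding hasd_def by (rule DERIV_diff)

lemma hasd_mult: "hasd j f x A \<Longrightarrow> hasd j g x B \<Longrightarrow> hasd j (\<lambda>y. f y * g y) x (A * g x + f x * B)"
  unfolding hasd_def by (drule (1) DERIV_mult) (simp add: mult.commute)

lemma hasd_const: "hasd j (\<lambda>y. c) x 0"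
  unfolding hasd_def by simp

lemma hasd_cmult: "hasd j f x A \<Longrightarrow> hasd j (\<lambda>y. c * f y) x (c * A)"
  unfolding hasd_def by (rule DERIV_cmult)

lemma hasd_pow: "hasd j f x A \<Longrightarrow> hasd j (\<lambda>y. f y ^ n) x (real n * f x ^ (n - 1) * A)"
  unfolding hasd_def by (drule DERIV_power[where n=n]) (simp add: mult_ac)

lemma hasd_sum: "finite S \<Longrightarrow> (\<And>i. i \<in> S \<Longrightarrow> hasd j (f i) x (A i)) \<Longrightarrow>
   hasd j (\<lambda>y. \<Sum>i\<in>S. f i y) x (\<Sum>i\<in>S. A i)"
  unfolding hasd_def by (rule DERIV_sum)

lemma hasd_shift:
  assumes "hasd j f (x + t *\<^sub>R axis j 1) D"
  shows "((\<lambda>s. f (x + s *\<^sub>R axis j 1)) has_real_derivative D) (at t)"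
proof -
  have "((\<lambda>s. f (x + (s + t) *\<^sub>R axis j 1)) has_real_derivative D) (at 0)"
    using assms unfolding hasd_def by (simp add: algebra_simps)
  then show ?thesis using DERIV_shift[of "(\<lambda>s. f (x + s *\<^sub>R axis j 1))" D 0 t] by simp
qed

lemma pd_local:
  assumes "open U" "x \<in> U" "\<And>y. y \<in> U \<Longrightarrow> f y = g y"
  shows "pd j f x = pd j g x"
proof -
  have c: "isCont (\<lambda>t::real. x + t *\<^sub>R axis j 1) 0" by (intro continuous_intros)
  have "\<forall>\<^sub>F t in nhds 0. x + t *\<^sub>R axis j 1 \<in> U"
  proof (rule topological_tendstoD[OF _ assms(1)])
    show "((\<lambda>t::real. x + t *\<^sub>R axis j 1) \<longlongrightarrow> x) (nhds 0)"
    proof -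
      have "((\<lambda>t::real. x + t *\<^sub>R axis j 1) \<longlongrightarrow> x + 0 *\<^sub>R axis j 1) (nhds 0)"
        by (intro tendsto_intros filterlim_ident)
      then show ?thesis by simp
    qed
  qed (use assms in auto)
  then have "\<forall>\<^sub>F t in nhds 0. t \<in> UNIV \<longrightarrow> f (x + t *\<^sub>R axis j 1) = g (x + t *\<^sub>R axis j 1)"
    by eventually_elim (simp add: assms(3))
  then show ?thesis unfolding pd_def
    by (intro vector_derivative_cong_eq) auto
qed

lemma pdl_local:
  assumes "open U" "\<And>y. y \<in> U \<Longrightarrow> f y = g y"
  shows "x \<in> U \<Longrightarrow> pdl js f x = pdl js g x"
proof (induction js arbitrary: x)
  case Nil then show ?case using assms by simp
next
  case (Cons j js)
  then show ?case using pd_local[OF assms(1) Cons.prems, of "pdl js f" "pdl js g"] by simp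
qed

lemma pdl_append: "pdl (a @ b) f = pdl a (pdl b f)"
  by (induction a) auto

lemma smooth_pdl: "smooth f \<Longrightarrow> smooth (pdl js f)"
  unfolding smooth_def by (simp add: pdl_append[symmetric])

lemma smooth_pd: "smooth f \<Longrightarrow> smooth (pd j f)"
  using smooth_pdl[of f "[j]"] by simp

lemma smooth_cont: "smooth f \<Longrightarrow> continuous_on UNIV f"
  unfolding smooth_def by (metis pdl.simps(1))

lemma smooth_hasd: "smooth f \<Longrightarrow> hasd j f x (pd j f x)"
  unfolding smooth_def by (metis differentiable_hasd pdl.simps(1))

lemma smoothI:
  assumes "\<And>js. continuous_on UNIV (pdl js f)"
    and "\<And>js j x. \<exists>D. hasd j (pdl js f) x D"
  shows "smooth f"
  unfolding smooth_def using assms hasd_differentiable by blast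

lemma smooth_const: "smooth (\<lambda>x. c)"
proof -
  have "\<exists>d. pdl js (\<lambda>x. c) = (\<lambda>x. d)" for js
  proof (induction js)
    case Nil then show ?case by auto
  next
    case (Cons j js)
    then obtain d where "pdl js (\<lambda>x. c) = (\<lambda>x. d)" by auto
    then have "pdl (j # js) (\<lambda>x. c) = (\<lambda>x. 0)"
      by (auto intro!: ext hasd_pd hasd_const)
    then show ?case by blast
  qed
  then show ?thesis
    by (intro smoothI) (metis continuous_on_const, metis hasd_const)
qed

lemma smooth_add:
  assumes "smooth f" "smooth g"
  shows "smooth (\<lambda>x. f x + g x)"
proof -
  have eq: "pdl js (\<lambda>x. f x + g x) = (\<lambda>x. pdl js f x + pdl js g x)" for js
  proof (induction js)
    case Nil then show ?case by simp
  next
    case (Cons j js)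
    show ?case
      by (auto simp: Cons intro!: ext hasd_pd hasd_add smooth_hasd smooth_pdl assms)
  qed
  show ?thesis
  proof (rule smoothI)
    fix js show "continuous_on UNIV (pdl js (\<lambda>x. f x + g x))"
      unfolding eq using smooth_cont[OF smooth_pdl[OF assms(1)]] smooth_cont[OF smooth_pdl[OF assms(2)]]
      by (intro continuous_intros)
  next
    fix js j x show "\<exists>D. hasd j (pdl js (\<lambda>x. f x + g x)) x D"
      unfolding eq by (blast intro: hasd_add smooth_hasd smooth_pdl assms)
  qed
qed

lemma smooth_sum: "finite S \<Longrightarrow> (\<And>i. i \<in> S \<Longrightarrow> smooth (f i)) \<Longrightarrow> smooth (\<lambda>x. \<Sum>i\<in>S. f i x)"
  by (induction S rule: finite_induct) (auto intro: smooth_const smooth_add)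

lemma laplacian_eq: "laplacian f = (\<lambda>x. \<Sum>j\<in>UNIV. pd j (pd j f) x)"
  by (simp add: laplacian_def fun_eq_iff)

lemma smooth_laplacian: "smooth f \<Longrightarrow> smooth (laplacian f)"
  unfolding laplacian_eq by (intro smooth_sum smooth_pd) auto

lemma pd_sum:
  assumes "\<And>i. i \<in> S \<Longrightarrow> smooth (f i)" "finite S"
  shows "pd j (\<lambda>x. \<Sum>i\<in>S. f i x) x = (\<Sum>i\<in>S. pd j (f i) x)"
  by (intro hasd_pd hasd_sum assms smooth_hasd)


lemma hasd_eq: "hasd j f x A \<Longrightarrow> A = B \<Longrightarrow> hasd j f x B" by simp

lemma hasd_scale:
  assumes "hasd j g ((1/R) *\<^sub>R x) D" "R \<noteq> 0"
  shows "hasd j (\<lambda>z. g ((1/R) *\<^sub>R z)) x (D / R)"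
proof -
  have d1: "((\<lambda>s. g ((1/R) *\<^sub>R x + s *\<^sub>R axis j 1)) has_real_derivative D) (at (0 / R))"
    using assms(1) unfolding hasd_def by simp
  have d2: "((\<lambda>t. t / R) has_real_derivative 1 / R) (at 0)"
    using assms(2) by (auto intro!: derivative_eq_intros)
  have "((\<lambda>t. g ((1/R) *\<^sub>R x + (t / R) *\<^sub>R axis j 1)) has_real_derivative D * (1 / R)) (at 0)"
    by (rule DERIV_chain2[OF d1 d2])
  moreover have "(\<lambda>t. g ((1/R) *\<^sub>R (x + t *\<^sub>R axis j 1))) = (\<lambda>t. g ((1/R) *\<^sub>R x + (t / R) *\<^sub>R axis j 1))"
    by (simp add: scaleR_add_right)
  ultimately show ?thesis unfolding hasd_def by simp
qed

lemma hasd_wR_form: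
  assumes "smooth \<phi>" "R > 0"
  shows "hasd j (\<lambda>z. K * pdl js \<phi> ((1/R) *\<^sub>R z)) x (K * (pd j (pdl js \<phi>) ((1/R) *\<^sub>R x) / R))"
  by (intro hasd_cmult hasd_scale smooth_hasd smooth_pdl assms) (use assms in auto)

lemma pdl_wR:
  assumes "smooth \<phi>" "R > 0"
  shows "pdl js (wR \<phi> R) = (\<lambda>x. R\<^sup>2 / R ^ length js * pdl js \<phi> ((1/R) *\<^sub>R x))"
proof (induction js)
  case Nil then show ?case by (simp add: wR_def fun_eq_iff)
next
  case (Cons j js)
  show ?case
  proof
    fix x
    have "hasd j (\<lambda>z. R\<^sup>2 / R ^ length js * pdl js \<phi> ((1/R) *\<^sub>R z)) x
            (R\<^sup>2 / R ^ length js * (pd j (pdl js \<phi>) ((1/R) *\<^sub>R x) / R))"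
      by (rule hasd_wR_form[OF assms])
    then show "pdl (j # js) (wR \<phi> R) x = R\<^sup>2 / R ^ length (j # js) * pdl (j # js) \<phi> ((1/R) *\<^sub>R x)"
      by (simp add: Cons hasd_pd)
  qed
qed

lemma smooth_wR:
  assumes "smooth \<phi>" "R > 0"
  shows "smooth (wR \<phi> R)"
proof (rule smoothI)
  fix js
  show "continuous_on UNIV (pdl js (wR \<phi> R))"
    unfolding pdl_wR[OF assms]
    by (intro continuous_intros continuous_on_compose2[OF smooth_cont[OF smooth_pdl[OF assms(1)]]]) auto
next
  fix js j x
  show "\<exists>D. hasd j (pdl js (wR \<phi> R)) x D"
    unfolding pdl_wR[OF assms] using hasd_wR_form[OF assms] by blast
qed

lemma pdl_zero: "pdl js (\<lambda>x::R3. 0::real) = (\<lambda>x. 0)"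
proof (induction js)
  case (Cons j js)
  have "pd j (\<lambda>y::R3. 0::real) = (\<lambda>x. 0)" using hasd_pd[OF hasd_const] by (simp add: fun_eq_iff)
  then show ?case by (simp add: Cons.IH)
qed simp

lemma pdl_vanish:
  fixes f :: "R3 \<Rightarrow> real"
  assumes "\<And>y. norm y > r \<Longrightarrow> f y = 0" "norm x > r"
  shows "pdl js f x = 0"
proof -
  have "open {y::R3. r < norm y}" by (intro open_Collect_less continuous_intros)
  then show ?thesis using pdl_local[of "{y. r < norm y}" f "\<lambda>_. 0" x js] assms
    by (auto simp: pdl_zero)
qed

lemma wR_vanish:
  assumes "admissible_phi \<phi>" "R > 0" "norm y > 2 * R"
  shows "wR \<phi> R y = 0"
proof -
  have "norm ((1/R) *\<^sub>R y) \<ge> 2" using assms(2,3) by (simp add: field_simps)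
  then show ?thesis using assms(1) by (simp add: wR_def admissible_phi_def)
qed

lemma wR_local:
  assumes "admissible_phi \<phi>" "R > 0" "norm y < R"
  shows "wR \<phi> R y = y \<bullet> y"
proof -
  have "norm ((1/R) *\<^sub>R y) \<le> 1" using assms(2,3) by (simp add: field_simps)
  then have "\<phi> ((1/R) *\<^sub>R y) = (norm y / R)\<^sup>2" using assms(1,2) by (simp add: admissible_phi_def)
  then show ?thesis using assms(2) by (simp add: wR_def power2_norm_eq_inner[symmetric] field_simps)
qed


lemma integrable_cont_supp:
  fixes G :: "R3 \<Rightarrow> real"
  assumes "continuous_on UNIV G" "\<And>x. norm x > r \<Longrightarrow> G x = 0"
  shows "integrable lborel G"
proof -
  have "integrable lborel (\<lambda>x. indicator (cball 0 r) x *\<^sub>R G x)"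
    by (rule borel_integrable_compact) (auto intro: continuous_on_subset[OF assms(1)])
  moreover have "(\<lambda>x. indicator (cball 0 r) x *\<^sub>R G x) = G"
    using assms(2) by (auto simp: fun_eq_iff indicator_def not_le)
  ultimately show ?thesis by simp
qed

lemma integral_shift:
  fixes G :: "R3 \<Rightarrow> real"
  assumes "continuous_on UNIV G"
  shows "integral\<^sup>L lborel (\<lambda>x. G (a + x)) = integral\<^sup>L lborel G"
proof -
  have "integral\<^sup>L lborel G = integral\<^sup>L (distr lborel borel ((+) a)) G"
    by (simp add: lborel_distr_plus)
  also have "\<dots> = integral\<^sup>L lborel (\<lambda>x. G (a + x))"
    by (rule integral_distr) (auto intro: borel_measurable_continuous_onI assms)
  finally show ?thesis by simp
qed

lemma cont_bounded:
  fixes g :: "R3 \<Rightarrow> real"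
  assumes "continuous_on UNIV g" "\<And>x. norm x > r \<Longrightarrow> g x = 0"
  shows "\<exists>M. \<forall>x. \<bar>g x\<bar> \<le> M"
proof -
  have "compact (g ` cball 0 r)"
    by (rule compact_continuous_image) (auto intro: continuous_on_subset[OF assms(1)])
  then obtain M where M: "\<And>y. y \<in> g ` cball 0 r \<Longrightarrow> norm y \<le> M"
    using compact_imp_bounded bounded_iff by metis
  show ?thesis
  proof (intro exI allI)
    fix x show "\<bar>g x\<bar> \<le> max M 0"
      using M[of "g x"] assms(2)[of x] by (cases "norm x \<le> r") auto
  qed
qed

lemma integral_pd_zero:
  fixes G g :: "R3 \<Rightarrow> real"
  assumes hasd: "\<And>x. hasd j G x (g x)" and cg: "continuous_on UNIV g"
    and cG: "continuous_on UNIV G"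
    and supp: "\<And>x. norm x > r \<Longrightarrow> G x = 0"
  shows "integrable lborel g" "integral\<^sup>L lborel g = 0"
proof -
  define e :: R3 where "e = axis j 1"
  have ne: "norm e = 1" by (simp add: e_def)
  have gsupp: "g x = 0" if "norm x > r" for x
  proof -
    have "g x = pd j G x" using hasd_pd[OF hasd] by simp
    also have "\<dots> = pd j (\<lambda>_. 0) x"
      by (rule pd_local[of "{y. r < norm y}"]) (auto intro: open_Collect_less continuous_intros supp that)
    also have "\<dots> = 0" by (rule hasd_pd[OF hasd_const])
    finally show ?thesis .
  qed
  show ig: "integrable lborel g" by (rule integrable_cont_supp[OF cg gsupp])
  obtain M where M: "\<And>x. \<bar>g x\<bar> \<le> M" using cont_bounded[OF cg gsupp] by blast
  define h :: "nat \<Rightarrow> real" where "h n = 1 / Suc n" for n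
  have hpos: "h n > 0" "h n \<le> 1" for n by (auto simp: h_def)
  define s where "s n x = (G (x + h n *\<^sub>R e) - G x) / h n" for n x
  have cs: "continuous_on UNIV (s n)" for n
    unfolding s_def by (intro continuous_intros continuous_on_compose2[OF cG]) (auto simp: hpos(1)[THEN less_imp_neq, symmetric])
  have ssupp: "s n x = 0" if "norm x > r + 1" for n x
  proof -
    have "norm (x + h n *\<^sub>R e) \<ge> norm x - h n"
      using norm_triangle_ineq2[of x "- (h n *\<^sub>R e)"] hpos[of n] ne by simp
    then have "norm (x + h n *\<^sub>R e) > r" using that hpos[of n] by linarith
    then show ?thesis using supp that by (simp add: s_def)
  qed
  have is_: "integrable lborel (s n)" for n by (rule integrable_cont_supp[OF cs ssupp])
  have int0: "integral\<^sup>L lborel (s n) = 0" for n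
  proof -
    have iG: "integrable lborel G" by (rule integrable_cont_supp[OF cG supp])
    have cGs: "continuous_on UNIV (\<lambda>x. G (h n *\<^sub>R e + x))"
      by (intro continuous_on_compose2[OF cG] continuous_intros) auto
    have iGs: "integrable lborel (\<lambda>x. G (h n *\<^sub>R e + x))"
    proof (rule integrable_cont_supp[OF cGs])
      fix x :: R3 assume "norm x > r + 1"
      moreover have "norm (h n *\<^sub>R e + x) \<ge> norm x - h n"
        using norm_triangle_ineq2[of x "- (h n *\<^sub>R e)"] hpos[of n] ne by (simp add: add.commute)
      ultimately show "G (h n *\<^sub>R e + x) = 0" using supp hpos[of n] by force
    qed
    have "integral\<^sup>L lborel (s n) = (integral\<^sup>L lborel (\<lambda>x. G (h n *\<^sub>R e + x)) - integral\<^sup>L lborel G) / h n"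
      unfolding s_def using iG iGs by (simp add: add.commute)
    also have "\<dots> = 0" using integral_shift[OF cG] by simp
    finally show ?thesis .
  qed
  have lim: "(\<lambda>n. s n x) \<longlonglongrightarrow> g x" for x
  proof -
    have "((\<lambda>t. G (x + t *\<^sub>R e)) has_real_derivative g x) (at 0)"
      using hasd[of x] by (simp add: hasd_def e_def)
    then have "((\<lambda>t. (G (x + t *\<^sub>R e) - G x) / t) \<longlongrightarrow> g x) (at 0)"
      unfolding DERIV_def by simp
    moreover have "filterlim h (at 0) sequentially"
    proof -
      have "h \<longlonglongrightarrow> 0" unfolding h_def using LIMSEQ_inverse_real_of_nat by (simp add: divide_inverse)
      then show ?thesis using hpos unfolding filterlim_at by (auto intro!: always_eventually less_imp_neq[symmetric])
    qed
    ultimately have "((\<lambda>n. (G (x + h n *\<^sub>R e) - G x) / h n) \<longlongrightarrow> g x) sequentially"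
      by (rule filterlim_compose)
    then show ?thesis by (simp add: s_def)
  qed
  have bound: "\<bar>s n x\<bar> \<le> M * indicator (cball (0::R3) (r + 1)) x" for n x
  proof (cases "norm x > r + 1")
    case True then show ?thesis using ssupp by simp
  next
    case False
    have "\<exists>z. 0 < z \<and> z < h n \<and> G (x + h n *\<^sub>R e) - G (x + 0 *\<^sub>R e) = (h n - 0) * g (x + z *\<^sub>R e)"
    proof (rule MVT2[where f="\<lambda>t. G (x + t *\<^sub>R e)"])
      show "0 < h n" by (rule hpos)
      fix t :: real show "((\<lambda>t. G (x + t *\<^sub>R e)) has_real_derivative g (x + t *\<^sub>R e)) (at t)"
        unfolding e_def by (rule hasd_shift) (use hasd in simp)
    qed
    then obtain z where z: "G (x + h n *\<^sub>R e) - G x = h n * g (x + z *\<^sub>R e)" by auto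
    have "s n x = g (x + z *\<^sub>R e)" using z hpos[of n] by (simp add: s_def)
    then show ?thesis using M[of "x + z *\<^sub>R e"] False by simp
  qed
  have "(\<lambda>n. integral\<^sup>L lborel (s n)) \<longlonglongrightarrow> integral\<^sup>L lborel g"
  proof (rule integral_dominated_convergence[where w="\<lambda>x. M * indicator (cball (0::R3) (r + 1)) x"])
    show "g \<in> borel_measurable lborel" using ig by auto
    show "s n \<in> borel_measurable lborel" for n using is_ by auto
    show "integrable lborel (\<lambda>x. M * indicator (cball (0::R3) (r + 1)) x)"
      using emeasure_bounded_finite[of "cball (0::R3) (r + 1)"]
      by (intro integrable_mult_right integrable_real_indicator) auto
    show "AE x in lborel. (\<lambda>n. s n x) \<longlonglongrightarrow> g x" using lim by simp
    show "AE x in lborel. norm (s n x) \<le> M * indicator (cball (0::R3) (r + 1)) x" for n using bound by simp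
  qed
  then show "integral\<^sup>L lborel g = 0" using int0 LIMSEQ_unique by (simp add: LIMSEQ_const_iff)
qed


definition cc :: "real \<Rightarrow> real" where "cc lam = lam\<^sup>2 / 3"
definition qf :: "real \<Rightarrow> R3 \<Rightarrow> real" where "qf lam y = 1 + cc lam * (y \<bullet> y)"
definition ip :: "real \<Rightarrow> R3 \<Rightarrow> real" where "ip lam y = 1 / sqrt (qf lam y)"
definition vf :: "real \<Rightarrow> R3 \<Rightarrow> real" where "vf lam y = sqrt lam * ip lam y"
definition Df :: "real \<Rightarrow> 3 \<Rightarrow> R3 \<Rightarrow> real" where
  "Df lam k y = - sqrt lam * cc lam * y$k * ip lam y ^ 3"
definition Hf :: "real \<Rightarrow> 3 \<Rightarrow> 3 \<Rightarrow> R3 \<Rightarrow> real" where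
  "Hf lam j k y = - sqrt lam * cc lam * (if j = k then 1 else 0) * ip lam y ^ 3
     + 3 * sqrt lam * (cc lam)\<^sup>2 * y$j * y$k * ip lam y ^ 5"

lemma qf_pos: "qf lam y \<ge> 1"
  unfolding qf_def cc_def by (simp add: inner_ge_zero)

lemma hasd_chain: "hasd j f x A \<Longrightarrow> (h has_real_derivative B) (at (f x)) \<Longrightarrow> hasd j (\<lambda>y. h (f y)) x (B * A)"
  unfolding hasd_def by (rule DERIV_chain2) auto

lemma hasd_coord: "hasd j (\<lambda>y. y $ k) x (if j = k then 1 else 0)"
proof -
  have "(\<lambda>t. (x + t *\<^sub>R axis j 1) $ k) = (\<lambda>t. x $ k + t * (if j = k then 1 else 0))"
    by (auto simp: axis_def fun_eq_iff)
  moreover have "((\<lambda>t. x $ k + t * (if j = k then 1 else 0)) has_real_derivative (if j = k then 1 else 0)) (at 0)"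
    by (auto intro!: derivative_eq_intros)
  ultimately show ?thesis unfolding hasd_def by simp
qed

lemma hasd_qf: "hasd j (qf lam) x (2 * cc lam * x $ j)"
proof -
  have e: "qf lam = (\<lambda>y. 1 + cc lam * (\<Sum>i\<in>UNIV. y $ i * y $ i))"
    by (simp add: qf_def inner_vec_def fun_eq_iff)
  have "hasd j (\<lambda>y. 1 + cc lam * (\<Sum>i\<in>UNIV. y $ i * y $ i)) x
     (0 + cc lam * (\<Sum>i\<in>UNIV. (if j = i then 1 else 0) * x $ i + x $ i * (if j = i then 1 else 0)))"
    by (intro hasd_add hasd_const hasd_cmult hasd_sum hasd_mult hasd_coord) auto
  moreover have "(\<Sum>i\<in>UNIV. (if j = i then 1 else 0) * x $ i + x $ i * (if j = i then 1 else 0)) = 2 * x $ j"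
    by (simp add: if_distrib sum.If_cases)
  ultimately show ?thesis unfolding e by (simp add: mult_ac)
qed

lemma hasd_ip: "hasd j (ip lam) x (- cc lam * x $ j * ip lam x ^ 3)"
proof -
  have q: "qf lam x > 0" using qf_pos[of lam x] by simp
  have d: "((\<lambda>z. 1 / sqrt z) has_real_derivative - (inverse (sqrt (qf lam x)) / 2) / (sqrt (qf lam x))\<^sup>2) (at (qf lam x))"
    using q by (auto intro!: derivative_eq_intros DERIV_real_sqrt simp: power2_eq_square)
  have "hasd j (ip lam) x (- (inverse (sqrt (qf lam x)) / 2) / (sqrt (qf lam x))\<^sup>2 * (2 * cc lam * x $ j))"
    unfolding ip_def by (rule hasd_chain[OF hasd_qf d])
  moreover have "- (inverse (sqrt (qf lam x)) / 2) / (sqrt (qf lam x))\<^sup>2 * (2 * cc lam * x $ j) = - cc lam * x $ j * ip lam x ^ 3"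
    using q by (simp add: ip_def field_simps power3_eq_cube power2_eq_square)
  ultimately show ?thesis by simp
qed

lemma hasd_vf: "hasd j (vf lam) x (Df lam j x)"
proof -
  have "hasd j (vf lam) x (sqrt lam * (- cc lam * x $ j * ip lam x ^ 3))"
    unfolding vf_def[abs_def] by (intro hasd_cmult hasd_ip)
  then show ?thesis by (simp add: Df_def mult_ac)
qed

lemma hasd_Df: "hasd j (Df lam k) x (Hf lam j k x)"
proof -
  have e: "Df lam k = (\<lambda>y. (- sqrt lam * cc lam) * (y $ k * ip lam y ^ 3))"
    by (simp add: Df_def fun_eq_iff)
  have "hasd j (Df lam k) x ((- sqrt lam * cc lam) * ((if j = k then 1 else 0) * ip lam x ^ 3 +
      x $ k * (real 3 * ip lam x ^ (3 - 1) * (- cc lam * x $ j * ip lam x ^ 3))))"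
    unfolding e by (intro hasd_cmult hasd_mult hasd_coord hasd_pow hasd_ip)
  moreover have "(- sqrt lam * cc lam) * ((if j = k then 1 else 0) * ip lam x ^ 3 +
      x $ k * (real 3 * ip lam x ^ (3 - 1) * (- cc lam * x $ j * ip lam x ^ 3))) = Hf lam j k x"
    by (simp add: Hf_def algebra_simps power2_eq_square power_def numeral_eq_Suc)
  ultimately show ?thesis by simp
qed

lemma Hf_sym: "Hf lam j k x = Hf lam k j x"
  by (simp add: Hf_def mult_ac)

lemma Hf_trace:
  assumes "lam > 0"
  shows "(\<Sum>j\<in>UNIV. Hf lam j j x) = - (vf lam x ^ 5)"
proof -
  have q: "qf lam x > 0" using qf_pos[of lam x] by simp
  have ip2: "ip lam x ^ 2 * qf lam x = 1" using q by (simp add: ip_def power2_eq_square)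
  have xx: "(\<Sum>j\<in>UNIV. x $ j * x $ j) = x \<bullet> x" by (simp add: inner_vec_def)
  have "(\<Sum>j\<in>UNIV. Hf lam j j x) = - 3 * sqrt lam * cc lam * ip lam x ^ 3
      + 3 * sqrt lam * (cc lam)\<^sup>2 * (x \<bullet> x) * ip lam x ^ 5"
    unfolding xx[symmetric] by (simp add: Hf_def sum_3 algebra_simps)
  also have "\<dots> = - 3 * sqrt lam * cc lam * (ip lam x ^ 5 * qf lam x)
      + 3 * sqrt lam * (cc lam)\<^sup>2 * (x \<bullet> x) * ip lam x ^ 5"
  proof -
    have "ip lam x ^ 5 * qf lam x = ip lam x ^ 3 * (ip lam x ^ 2 * qf lam x)"
      by (simp add: mult.assoc[symmetric] power_add[symmetric])
    then show ?thesis by (simp add: ip2)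
  qed
  also have "\<dots> = - 3 * sqrt lam * cc lam * ip lam x ^ 5"
    by (simp add: qf_def algebra_simps power2_eq_square)
  also have "\<dots> = - (vf lam x ^ 5)"
  proof -
    have s2: "sqrt lam ^ 2 = lam" using assms by simp
    have "sqrt lam ^ 5 = sqrt lam * (sqrt lam ^ 2)\<^sup>2" by algebra
    then have "sqrt lam ^ 5 = sqrt lam * lam\<^sup>2" by (simp only: s2)
    then show ?thesis by (simp add: vf_def cc_def power_mult_distrib)
  qed
  finally show ?thesis .
qed

lemma cont_qf: "continuous_on UNIV (qf lam)"
  unfolding qf_def[abs_def] by (intro continuous_intros)

lemma cont_ip: "continuous_on UNIV (ip lam)"
proof -
  have n: "\<And>y. sqrt (qf lam y) \<noteq> 0" using qf_pos by (metis not_one_le_zero real_sqrt_eq_zero_cancel_iff)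
  have "continuous_on UNIV (\<lambda>y. sqrt (qf lam y))"
    by (rule continuous_on_real_sqrt[OF cont_qf])
  then have "continuous_on UNIV (\<lambda>y. 1 / sqrt (qf lam y))"
    using n by (intro continuous_on_divide continuous_on_const) auto
  then show ?thesis unfolding ip_def[abs_def] .
qed

lemma cont_vf: "continuous_on UNIV (vf lam)"
  unfolding vf_def[abs_def] by (intro continuous_intros cont_ip)

lemma cont_Df: "continuous_on UNIV (Df lam k)"
  unfolding Df_def[abs_def] by (intro continuous_intros cont_ip)

lemma cont_Hf: "continuous_on UNIV (Hf lam j k)"
  unfolding Hf_def[abs_def] by (intro continuous_intros cont_ip)

lemma vf_W:
  assumes "lam > 0"
  shows "sqrt lam * W (lam *\<^sub>R x) = vf lam x"
proof -
  have "(norm (lam *\<^sub>R x))\<^sup>2 = (lam *\<^sub>R x) \<bullet> (lam *\<^sub>R x)"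
    by (rule power2_norm_eq_inner)
  also have "\<dots> = lam\<^sup>2 * (x \<bullet> x)"
    by (simp only: inner_scaleR_left inner_scaleR_right power2_eq_square mult.assoc)
  finally have n: "1 + (norm (lam *\<^sub>R x))\<^sup>2 / 3 = qf lam x"
    by (simp add: cc_def qf_def)
  have "W (lam *\<^sub>R x) = (qf lam x) powr (-1/2)" unfolding W_def n ..
  also have "\<dots> = ip lam x"
  proof -
    have "(qf lam x) powr (-1/2) = inverse ((qf lam x) powr (1/2))"
    proof -
      have m: "-1/2 = -(1/2::real)" by simp
      show ?thesis unfolding m by (rule powr_minus)
    qed
    also have "(qf lam x) powr (1/2) = sqrt (qf lam x)"
      using qf_pos[of lam x] by (intro powr_half_sqrt) simp
    finally show ?thesis by (simp add: ip_def inverse_eq_divide)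
  qed
  finally show ?thesis by (simp add: vf_def)
qed


definition gexpr :: "real \<Rightarrow> (3 \<Rightarrow> real) \<Rightarrow> (3 \<Rightarrow> 3 \<Rightarrow> real) \<Rightarrow> (3 \<Rightarrow> real) \<Rightarrow> (3 \<Rightarrow> 3 \<Rightarrow> real)
   \<Rightarrow> real \<Rightarrow> (3 \<Rightarrow> real) \<Rightarrow> (3 \<Rightarrow> real) \<Rightarrow> 3 \<Rightarrow> real" where
  "gexpr v D H w1 w2 L L1 L2 j =
     (-1) * (L2 j * v ^ 2 + L1 j * (real 2 * v ^ (2 - 1) * D j))
   + (L1 j * (2 * (v * D j)) + L * (2 * (D j * D j + v * H j j)))
   + 4 * (\<Sum>k\<in>UNIV. w2 j k * (D j * D k) + w1 k * (H j j * D k + D j * H j k))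
   + (-2) * (w2 j j * (\<Sum>k\<in>UNIV. D k ^ 2) + w1 j * (\<Sum>k\<in>UNIV. real 2 * D k ^ (2 - 1) * H j k))
   + (2/3) * (w2 j j * v ^ 6 + w1 j * (real 6 * v ^ (6 - 1) * D j))"

lemma alg_identity:
  assumes "\<And>j k. H j k = H k j" "(\<Sum>j\<in>UNIV. H j j) = - (v ^ 5)" "L = (\<Sum>j\<in>UNIV. w2 j j)"
  shows "- (\<Sum>j\<in>UNIV. L2 j) * v\<^sup>2 + 4 * (\<Sum>j\<in>UNIV. \<Sum>k\<in>UNIV. D j * D k * w2 j k) - 4/3 * L * v ^ 6
     = (\<Sum>j\<in>UNIV. gexpr v D H w1 w2 L L1 L2 j)"
proof -
  have h: "H 2 1 = H 1 2" "H 3 1 = H 1 3" "H 3 2 = H 2 3" using assms(1) by auto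
  have h3: "H 3 3 = - (v ^ 5) - H 1 1 - H 2 2" using assms(2) by (simp add: sum_3)
  show ?thesis unfolding gexpr_def assms(3)
    by (simp add: sum_3 h h3 algebra_simps power2_eq_square power_def numeral_eq_Suc)
qed


definition Gf :: "(R3 \<Rightarrow> real) \<Rightarrow> real \<Rightarrow> 3 \<Rightarrow> R3 \<Rightarrow> real" where
  "Gf w lam j y =
     (-1) * (pd j (laplacian w) y * vf lam y ^ 2)
   + laplacian w y * (2 * (vf lam y * Df lam j y))
   + 4 * (\<Sum>k\<in>UNIV. pd k w y * (Df lam j y * Df lam k y))
   + (-2) * (pd j w y * (\<Sum>k\<in>UNIV. Df lam k y ^ 2))
   + (2/3) * (pd j w y * vf lam y ^ 6)"

definition gf :: "(R3 \<Rightarrow> real) \<Rightarrow> real \<Rightarrow> 3 \<Rightarrow> R3 \<Rightarrow> real" where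
  "gf w lam j y = gexpr (vf lam y) (\<lambda>k. Df lam k y) (\<lambda>a b. Hf lam a b y) (\<lambda>k. pd k w y)
      (\<lambda>a b. pd a (pd b w) y) (laplacian w y) (\<lambda>a. pd a (laplacian w) y) (\<lambda>a. pd a (pd a (laplacian w)) y) j"

lemma hasd_Gf:
  assumes "smooth w"
  shows "hasd j (Gf w lam j) x (gf w lam j x)"
proof -
  have sL: "smooth (laplacian w)" by (rule smooth_laplacian[OF assms])
  show ?thesis
    unfolding Gf_def[abs_def] gf_def gexpr_def
    by (intro hasd_add hasd_cmult hasd_mult hasd_pow hasd_sum hasd_vf hasd_Df
        smooth_hasd smooth_pd sL assms) auto
qed

lemma cont_Gf:
  assumes "smooth w"
  shows "continuous_on UNIV (Gf w lam j)"
proof -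
  have sL: "smooth (laplacian w)" by (rule smooth_laplacian[OF assms])
  have c1: "continuous_on UNIV (pd j (laplacian w))" by (rule smooth_cont[OF smooth_pd[OF sL]])
  have c2: "continuous_on UNIV (laplacian w)" by (rule smooth_cont[OF sL])
  have c3: "continuous_on UNIV (pd k w)" for k by (rule smooth_cont[OF smooth_pd[OF assms]])
  note cv = cont_vf[of lam] cont_Df[of lam]
  show ?thesis
    unfolding Gf_def[abs_def]
    by (intro continuous_on_add continuous_on_mult continuous_on_const continuous_on_power
         continuous_on_sum c1 c2 c3 cv)
qed

lemma cont_gf:
  assumes "smooth w"
  shows "continuous_on UNIV (gf w lam j)"
proof -
  have sL: "smooth (laplacian w)" by (rule smooth_laplacian[OF assms])
  have c1: "continuous_on UNIV (pd a (laplacian w))" for a by (rule smooth_cont[OF smooth_pd[OF sL]])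
  have c1': "continuous_on UNIV (pd a (pd a (laplacian w)))" for a by (rule smooth_cont[OF smooth_pd[OF smooth_pd[OF sL]]])
  have c2: "continuous_on UNIV (laplacian w)" by (rule smooth_cont[OF sL])
  have c3: "continuous_on UNIV (pd k w)" for k by (rule smooth_cont[OF smooth_pd[OF assms]])
  have c4: "continuous_on UNIV (pd a (pd k w))" for a k by (rule smooth_cont[OF smooth_pd[OF smooth_pd[OF assms]]])
  note cv = cont_vf[of lam] cont_Df[of lam] cont_Hf[of lam]
  show ?thesis
    unfolding gf_def[abs_def] gexpr_def
    by (intro continuous_on_add continuous_on_mult continuous_on_const continuous_on_power
         continuous_on_sum c1 c1' c2 c3 c4 cv)
qed

lemma Gf_vanish:
  assumes "smooth w" "\<And>y. norm y > r \<Longrightarrow> w y = 0" "norm x > r"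
  shows "Gf w lam j x = 0"
proof -
  have w1: "pd k w y = 0" if "norm y > r" for k y
    using pdl_vanish[OF assms(2) that, where js="[k]"] by simp
  have w2: "pd a (pd b w) y = 0" if "norm y > r" for a b y
    using pdl_vanish[OF assms(2) that, where js="[a,b]"] by simp
  have L: "laplacian w y = 0" if "norm y > r" for y
    using w2[OF that] by (simp add: laplacian_def)
  have L1: "pd j (laplacian w) x = 0"
    using pdl_vanish[OF L assms(3), where js="[j]"] by simp
  show ?thesis using w1[OF assms(3)] L[OF assms(3)] L1 by (simp add: Gf_def)
qed

lemma pd_u:
  "pd j (\<lambda>y. cis \<theta> * complex_of_real (vf lam y)) x = cis \<theta> * complex_of_real (Df lam j x)"
proof -
  have "((\<lambda>t. vf lam (x + t *\<^sub>R axis j 1)) has_real_derivative Df lam j x) (at 0)"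
    using hasd_vf unfolding hasd_def .
  then have "((\<lambda>t. cis \<theta> * complex_of_real (vf lam (x + t *\<^sub>R axis j 1))) has_vector_derivative
      cis \<theta> * complex_of_real (Df lam j x)) (at 0)"
    by (intro has_vector_derivative_mult_right has_vector_derivative_of_real)
  then show ?thesis unfolding pd_def by (rule vector_derivative_at)
qed

definition Ifun :: "(R3 \<Rightarrow> real) \<Rightarrow> real \<Rightarrow> R3 \<Rightarrow> real" where
  "Ifun w lam x = - laplacian (laplacian w) x * (vf lam x)\<^sup>2
     + 4 * (\<Sum>j\<in>UNIV. \<Sum>k\<in>UNIV. Df lam j x * Df lam k x * pd j (pd k w) x)
     - 4/3 * laplacian w x * vf lam x ^ 6"

lemma cm_cis: "cmod (cis \<theta> * complex_of_real a) = \<bar>a\<bar>"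
  by (simp add: norm_mult)

lemma re_cis: "Re (cnj (cis \<theta> * complex_of_real a) * (cis \<theta> * complex_of_real b)) = a * b"
proof -
  have e: "cnj (cis \<theta> * complex_of_real a) * (cis \<theta> * complex_of_real b) = (cnj (cis \<theta>) * cis \<theta>) * complex_of_real (a * b)"
    by (simp add: mult_ac)
  have one: "cnj (cis \<theta>) * cis \<theta> = 1" by (simp add: cis_cnj cis_mult)
  show ?thesis unfolding e one by simp
qed

lemma integrand_eq:
  "(- laplacian (laplacian w) x) * (cmod (cis \<theta> * complex_of_real (vf lam x)))\<^sup>2
    + 4 * (\<Sum>j\<in>UNIV. \<Sum>k\<in>UNIV. Re (cnj (pd j (\<lambda>y. cis \<theta> * complex_of_real (vf lam y)) x)
           * pd k (\<lambda>y. cis \<theta> * complex_of_real (vf lam y)) x) * pd j (pd k w) x)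
    - 4/3 * laplacian w x * cmod (cis \<theta> * complex_of_real (vf lam x)) ^ 6
   = Ifun w lam x"
  unfolding pd_u cm_cis re_cis Ifun_def by (simp add: power_abs)

lemma finite_Ifun:
  assumes phi: "admissible_phi \<phi>" and R: "R > 0" and lam: "lam > 0"
  shows "(LINT x|lborel. Ifun (wR \<phi> R) lam x) = 0"
proof -
  define w where "w = wR \<phi> R"
  have sphi: "smooth \<phi>" using phi by (simp add: admissible_phi_def)
  have sw: "smooth w" unfolding w_def by (rule smooth_wR[OF sphi R])
  have wv: "w y = 0" if "norm y > 2 * R" for y
    unfolding w_def by (rule wR_vanish[OF phi R that])
  have pt: "Ifun w lam x = (\<Sum>j\<in>UNIV. gf w lam j x)" for x
    unfolding gf_def Ifun_def
    by (subst laplacian_def, rule alg_identity) (auto simp: Hf_sym Hf_trace[OF lam] laplacian_def)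
  have iz: "integrable lborel (gf w lam j) \<and> integral\<^sup>L lborel (gf w lam j) = 0" for j
  proof -
    have gv: "\<And>x. norm x > 2 * R \<Longrightarrow> Gf w lam j x = 0"
      by (rule Gf_vanish[OF sw wv]) auto
    show ?thesis using integral_pd_zero[OF hasd_Gf[OF sw] cont_gf[OF sw] cont_Gf[OF sw] gv] by simp
  qed
  have "(LINT x|lborel. (\<Sum>j\<in>UNIV. gf w lam j x)) = (\<Sum>j\<in>UNIV. LINT x|lborel. gf w lam j x)"
    by (rule Bochner_Integration.integral_sum) (use iz in auto)
  also have "\<dots> = 0"
    using iz by simp
  finally show ?thesis unfolding w_def[symmetric] pt .
qed


definition f1 :: "real \<Rightarrow> real" where "f1 x = indicator {2..} x * x powr (-4/3)"
definition h1 :: "real \<Rightarrow> real" where "h1 t = f1 (2 + t) + f1 (2 + (-1) * t)"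

lemma f1_integrable: "integrable lborel f1"
proof -
  have "(\<lambda>x::real. x powr (-4/3)) integrable_on {2..}"
    using has_integral_powr_to_inf[of "-4/3" 2] unfolding integrable_on_def by auto
  then have "(\<lambda>x::real. x powr (-4/3)) absolutely_integrable_on {2..}"
    by (rule nonnegative_absolutely_integrable_1) simp
  then have "integrable lebesgue (\<lambda>x::real. indicator {2..} x *\<^sub>R x powr (-4/3))"
    unfolding set_integrable_def .
  then have "integrable lborel (\<lambda>x::real. indicator {2..} x *\<^sub>R x powr (-4/3))"
    by (subst (asm) integrable_completion) auto
  then show ?thesis unfolding f1_def[abs_def] by simp
qed

lemma h1_integrable: "integrable lborel h1"
proof -
  have "integrable lborel (\<lambda>x. f1 (2 + 1 * x))"
    using lborel_integrable_real_affine_iff[of 1 f1 2] f1_integrable by simp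
  moreover have "integrable lborel (\<lambda>x. f1 (2 + (-1) * x))"
    using lborel_integrable_real_affine_iff[of "-1" f1 2] f1_integrable by simp
  ultimately show ?thesis unfolding h1_def[abs_def] by simp
qed

lemma f1_nonneg: "f1 x \<ge> 0" by (simp add: f1_def)

lemma h1_lower: "h1 t \<ge> (2 + \<bar>t\<bar>) powr (-4/3)"
proof (cases "t \<ge> 0")
  case True
  then have "f1 (2 + t) = (2 + \<bar>t\<bar>) powr (-4/3)" by (simp add: f1_def)
  then show ?thesis using f1_nonneg[of "2 + (-1) * t"] by (simp add: h1_def)
next
  case False
  then have "f1 (2 + (-1) * t) = (2 + \<bar>t\<bar>) powr (-4/3)" by (simp add: f1_def)
  then show ?thesis using f1_nonneg[of "2 + t"] by (simp add: h1_def)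
qed

lemma h1_nonneg: "h1 t \<ge> 0" using f1_nonneg by (simp add: h1_def add_nonneg_nonneg)

lemma h1_meas[measurable]: "h1 \<in> borel_measurable borel"
  using h1_integrable by (auto dest: borel_measurable_integrable)

definition Hm :: "R3 \<Rightarrow> real" where "Hm y = (\<Prod>b\<in>Basis. h1 (y \<bullet> b))"

lemma Hm_integrable: "integrable lborel Hm"
proof -
  have m: "(\<lambda>f. \<Sum>b\<in>Basis. f b *\<^sub>R b) \<in> measurable (\<Pi>\<^sub>M b\<in>(Basis::R3 set). lborel) borel"
    by measurable
  have mH: "Hm \<in> borel_measurable borel" unfolding Hm_def[abs_def] by measurable
  have eq: "Hm (\<Sum>b\<in>Basis. f b *\<^sub>R b) = (\<Prod>b\<in>(Basis::R3 set). h1 (f b))" for f :: "R3 \<Rightarrow> real"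
  proof -
    have "(\<Sum>b'\<in>Basis. f b' *\<^sub>R b') \<bullet> b = f b" if "b \<in> (Basis::R3 set)" for b
      using that by (simp add: inner_sum_left inner_Basis if_distrib sum.If_cases)
    then show ?thesis unfolding Hm_def by (intro prod.cong) auto
  qed
  have "integrable (\<Pi>\<^sub>M b\<in>(Basis::R3 set). lborel) (\<lambda>f. \<Prod>b\<in>Basis. h1 (f b))"
    by (rule product_sigma_finite.product_integrable_prod) (auto intro: h1_integrable lborel.sigma_finite_measure_axioms simp: product_sigma_finite_def)
  then have "integrable (\<Pi>\<^sub>M b\<in>(Basis::R3 set). lborel) (\<lambda>f. Hm (\<Sum>b\<in>Basis. f b *\<^sub>R b))"
    by (simp add: eq)
  then have "integrable (distr (\<Pi>\<^sub>M b\<in>(Basis::R3 set). lborel) borel (\<lambda>f. \<Sum>b\<in>Basis. f b *\<^sub>R b)) Hm"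
    by (subst integrable_distr_eq[OF m mH])
  then show ?thesis by (simp flip: lborel_eq)
qed

lemma Hm_bound: "1 / (1 + y \<bullet> y)\<^sup>2 \<le> 36 * Hm y"
proof -
  define \<rho> where "\<rho> = 1 + y \<bullet> y"
  have rp: "\<rho> \<ge> 1" unfolding \<rho>_def by (simp add: inner_ge_zero)
  have one: "(2 + \<bar>y \<bullet> b\<bar>) powr (4/3) \<le> (6 * \<rho>) powr (2/3)" if "b \<in> Basis" for b
  proof -
    have "\<bar>y \<bullet> b\<bar> \<le> norm y" by (rule Basis_le_norm[OF that])
    then have "(y \<bullet> b)\<^sup>2 \<le> y \<bullet> y"
      by (metis abs_ge_zero power2_norm_eq_inner power_mono power2_abs)
    then have "(2 + \<bar>y \<bullet> b\<bar>)\<^sup>2 \<le> 6 * \<rho>"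
    proof -
      assume a2: "(y \<bullet> b)\<^sup>2 \<le> y \<bullet> y"
      define a where "a = \<bar>y \<bullet> b\<bar>"
      have "a\<^sup>2 \<le> y \<bullet> y" using a2 by (simp add: a_def)
      moreover have "0 \<le> (a - 1)\<^sup>2" by simp
      moreover have "0 \<le> y \<bullet> y" by simp
      moreover have "(a - 1)\<^sup>2 = a\<^sup>2 - 2 * a + 1" by (simp add: power2_eq_square algebra_simps)
      moreover have "(2 + a)\<^sup>2 = 4 + 4 * a + a\<^sup>2" by (simp add: power2_eq_square algebra_simps)
      ultimately have "(2 + a)\<^sup>2 \<le> 6 * \<rho>" unfolding \<rho>_def by (smt (verit))
      then show ?thesis by (simp add: a_def)
    qed
    then have "((2 + \<bar>y \<bullet> b\<bar>)\<^sup>2) powr (2/3) \<le> (6 * \<rho>) powr (2/3)"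
      by (intro powr_mono2) auto
    moreover have "((2 + \<bar>y \<bullet> b\<bar>)\<^sup>2) powr (2/3) = (2 + \<bar>y \<bullet> b\<bar>) powr (4/3)"
    proof -
      define X where "X = 2 + \<bar>y \<bullet> b\<bar>"
      have X: "X > 0" unfolding X_def by simp
      have "X\<^sup>2 = X powr 2" using powr_realpow[of X 2] X by simp
      then have "(X\<^sup>2) powr (2/3) = X powr (2 * (2/3))" by (simp add: powr_powr)
      then show ?thesis unfolding X_def[symmetric] by simp
    qed
    ultimately show ?thesis by simp
  qed
  have "(\<Prod>b\<in>(Basis::R3 set). (2 + \<bar>y \<bullet> b\<bar>) powr (4/3)) \<le> (\<Prod>b\<in>(Basis::R3 set). (6 * \<rho>) powr (2/3))"
    by (intro prod_mono) (auto intro: one)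
  also have "\<dots> = ((6 * \<rho>) powr (2/3)) ^ 3" by simp
  also have "\<dots> = 36 * \<rho>\<^sup>2"
  proof -
    have Z: "6 * \<rho> > 0" using rp by simp
    have "((6 * \<rho>) powr (2/3)) ^ 3 = ((6 * \<rho>) powr (2/3)) powr 3"
      using powr_realpow[of "(6 * \<rho>) powr (2/3)" 3] Z by simp
    also have "\<dots> = (6 * \<rho>) powr (2/3 * 3)" by (rule powr_powr)
    also have "\<dots> = (6 * \<rho>) powr 2" by simp
    also have "\<dots> = (6 * \<rho>)\<^sup>2" using powr_realpow[of "6 * \<rho>" 2] Z by simp
    finally show ?thesis by (simp add: power_mult_distrib)
  qed
  finally have P: "(\<Prod>b\<in>(Basis::R3 set). (2 + \<bar>y \<bullet> b\<bar>) powr (4/3)) \<le> 36 * \<rho>\<^sup>2" .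
  have pos: "(\<Prod>b\<in>(Basis::R3 set). (2 + \<bar>y \<bullet> b\<bar>) powr (4/3)) > 0"
    by (intro prod_pos) auto
  have inv: "(2 + \<bar>y \<bullet> b\<bar>) powr (-4/3) = inverse ((2 + \<bar>y \<bullet> b\<bar>) powr (4/3))" for b
  proof -
    have m: "-4/3 = -(4/3::real)" by simp
    show ?thesis unfolding m by (rule powr_minus)
  qed
  have "(\<Prod>b\<in>(Basis::R3 set). (2 + \<bar>y \<bullet> b\<bar>) powr (-4/3)) = inverse (\<Prod>b\<in>(Basis::R3 set). (2 + \<bar>y \<bullet> b\<bar>) powr (4/3))"
    unfolding inv using prod_inversef[of "\<lambda>b. (2 + \<bar>y \<bullet> b\<bar>) powr (4/3)" "Basis::R3 set"] by (simp add: o_def)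
  also have "\<dots> \<ge> inverse (36 * \<rho>\<^sup>2)"
    using P pos by (intro le_imp_inverse_le) auto
  finally have "inverse (36 * \<rho>\<^sup>2) \<le> (\<Prod>b\<in>(Basis::R3 set). (2 + \<bar>y \<bullet> b\<bar>) powr (-4/3))" .
  also have "\<dots> \<le> Hm y" unfolding Hm_def
    by (intro prod_mono) (auto intro: h1_lower[simplified])
  finally have "inverse (36 * \<rho>\<^sup>2) \<le> Hm y" .
  then show ?thesis using rp unfolding \<rho>_def[symmetric] by (simp add: field_simps)
qed


lemma hasd_N: "hasd k (\<lambda>y::R3. y \<bullet> y) x (2 * x $ k)"
proof -
  have e: "(\<lambda>y::R3. y \<bullet> y) = (\<lambda>y. (\<Sum>i\<in>UNIV. y $ i * y $ i))"
    by (simp add: inner_vec_def fun_eq_iff)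
  have "hasd k (\<lambda>y. (\<Sum>i\<in>UNIV. y $ i * y $ i)) x
     (\<Sum>i\<in>UNIV. (if k = i then 1 else 0) * x $ i + x $ i * (if k = i then 1 else 0))"
    by (intro hasd_sum hasd_mult hasd_coord) auto
  moreover have "(\<Sum>i\<in>UNIV. (if k = i then 1 else 0) * x $ i + x $ i * (if k = i then 1 else 0)) = 2 * x $ k"
    by (simp add: if_distrib sum.If_cases)
  ultimately show ?thesis unfolding e by simp
qed

lemma pd_N: "pd k (\<lambda>y::R3. y \<bullet> y) = (\<lambda>y. 2 * y $ k)"
  by (rule ext, rule hasd_pd[OF hasd_N])

lemma pd_pd_N: "pd j (pd k (\<lambda>y::R3. y \<bullet> y)) x = 2 * (if j = k then 1 else 0)"
  unfolding pd_N by (rule hasd_pd, intro hasd_cmult hasd_coord)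

lemma wR_pdl_local:
  assumes "admissible_phi \<phi>" "R > 0" "norm x < R"
  shows "pdl js (wR \<phi> R) x = pdl js (\<lambda>y. y \<bullet> y) x"
proof (rule pdl_local[of "{y. norm y < R}"])
  show "open {y::R3. norm y < R}" by (intro open_Collect_less continuous_intros)
qed (use assms wR_local in auto)

lemma wR_pdpd_local:
  assumes "admissible_phi \<phi>" "R > 0" "norm x < R"
  shows "pd j (pd k (wR \<phi> R)) x = 2 * (if j = k then 1 else 0)"
  using wR_pdl_local[OF assms, of "[j,k]"] pd_pd_N by simp

lemma wR_lap_local:
  assumes "admissible_phi \<phi>" "R > 0" "norm x < R"
  shows "laplacian (wR \<phi> R) x = 6"
  using wR_pdpd_local[OF assms] by (simp add: laplacian_def sum_3)

lemma wR_laplap_local: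
  assumes "admissible_phi \<phi>" "R > 0" "norm x < R"
  shows "laplacian (laplacian (wR \<phi> R)) x = 0"
proof -
  have "pdl [j, j] (laplacian (wR \<phi> R)) x = pdl [j, j] (\<lambda>y. 6::real) x" for j
  proof (rule pdl_local[of "{y. norm y < R}"])
    show "open {y::R3. norm y < R}" by (intro open_Collect_less continuous_intros)
  qed (use assms wR_lap_local in auto)
  moreover have "pdl [j, j] (\<lambda>y::R3. 6::real) x = 0" for j
  proof -
    have c: "pd j (\<lambda>y::R3. 6::real) = (\<lambda>y. 0)" using hasd_pd[OF hasd_const] by (simp add: fun_eq_iff)
    show ?thesis by (simp add: c hasd_pd[OF hasd_const])
  qed
  ultimately show ?thesis by (simp add: laplacian_def)
qed

lemma wR_pdl_bound:
  assumes phi: "admissible_phi \<phi>" and R: "R > 0" and x: "x \<noteq> 0"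
    and C: "\<And>y. y \<noteq> 0 \<Longrightarrow> \<bar>pdl js \<phi> y\<bar> \<le> C * norm y powr (2 - real (length js))"
  shows "\<bar>pdl js (wR \<phi> R) x\<bar> \<le> C * norm x powr (2 - real (length js))"
proof -
  have sphi: "smooth \<phi>" using phi by (simp add: admissible_phi_def)
  define e where "e = 2 - real (length js)"
  have RR: "R\<^sup>2 / R ^ length js = R powr e"
    using R by (simp add: e_def powr_diff powr_realpow)
  have "\<bar>pdl js (wR \<phi> R) x\<bar> = R powr e * \<bar>pdl js \<phi> ((1/R) *\<^sub>R x)\<bar>"
    unfolding pdl_wR[OF sphi R] RR using R by (simp add: abs_mult)
  also have "\<dots> \<le> R powr e * (C * norm ((1/R) *\<^sub>R x) powr e)"
    using C[of "(1/R) *\<^sub>R x"] x R unfolding e_def by (intro mult_left_mono) auto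
  also have "\<dots> = C * (R powr e * (norm x / R) powr e)"
    using R by simp
  also have "R powr e * (norm x / R) powr e = norm x powr e"
    using R by (simp add: powr_divide)
  finally show ?thesis unfolding e_def .
qed

lemma laplap_sum:
  assumes "smooth f"
  shows "laplacian (laplacian f) x = (\<Sum>j\<in>UNIV. \<Sum>k\<in>UNIV. pdl [j, j, k, k] f x)"
proof -
  have L: "laplacian f = (\<lambda>y. \<Sum>k\<in>UNIV. pd k (pd k f) y)" by (rule laplacian_eq)
  have s2: "smooth (pd k (pd k f))" for k by (intro smooth_pd assms)
  have s3: "smooth (pd j (pd k (pd k f)))" for j k by (intro smooth_pd assms)
  have e1: "pd j (laplacian f) = (\<lambda>y. \<Sum>k\<in>UNIV. pd j (pd k (pd k f)) y)" for j
    unfolding L by (rule ext, rule pd_sum) (auto intro: s2)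
  have e2: "pd j (pd j (laplacian f)) y = (\<Sum>k\<in>UNIV. pd j (pd j (pd k (pd k f))) y)" for j y
    unfolding e1 by (rule pd_sum) (auto intro: s3)
  show ?thesis by (simp add: laplacian_def e2)
qed


lemma Ibound:
  fixes D :: "3 \<Rightarrow> real" and W :: "3 \<Rightarrow> 3 \<Rightarrow> real"
  assumes rho: "\<rho> \<ge> 1" and LL: "\<bar>LL\<bar> * \<rho> \<le> A" and Wb: "\<And>j k. \<bar>W j k\<bar> \<le> B" and Lb: "\<bar>L\<bar> \<le> 3 * B"
    and v1: "v\<^sup>2 * \<rho> \<le> V1" and v2: "\<And>k. (D k)\<^sup>2 * \<rho>\<^sup>2 \<le> V2" and v3: "v ^ 6 * \<rho>\<^sup>2 \<le> V3"
  shows "\<bar>- LL * v\<^sup>2 + 4 * (\<Sum>j\<in>UNIV. \<Sum>k\<in>UNIV. D j * D k * W j k) - 4/3 * L * v ^ 6\<bar> * \<rho>\<^sup>2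
         \<le> A * V1 + 36 * B * V2 + 4 * B * V3"
proof -
  have B0: "B \<ge> 0" using Wb[of 1 1] by linarith
  have r0: "\<rho> > 0" using rho by simp
  have T1: "\<bar>LL * v\<^sup>2\<bar> * \<rho>\<^sup>2 \<le> A * V1"
  proof -
    have "0 \<le> \<bar>LL\<bar> * \<rho>" using r0 by simp
    then have A0: "A \<ge> 0" using LL by linarith
    have "\<bar>LL * v\<^sup>2\<bar> * \<rho>\<^sup>2 = (\<bar>LL\<bar> * \<rho>) * (v\<^sup>2 * \<rho>)" by (simp add: abs_mult power2_eq_square)
    also have "\<dots> \<le> A * V1" using LL v1 r0 A0 by (intro mult_mono) auto
    finally show ?thesis .
  qed
  have T2: "\<bar>D j * D k * W j k\<bar> * \<rho>\<^sup>2 \<le> B * V2" for j k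
  proof -
    have sq: "0 \<le> (\<bar>D j\<bar> - \<bar>D k\<bar>)\<^sup>2" by simp
    have ex: "(\<bar>D j\<bar> - \<bar>D k\<bar>)\<^sup>2 = (D j)\<^sup>2 - 2 * \<bar>D j * D k\<bar> + (D k)\<^sup>2"
      by (simp add: power2_diff abs_mult)
    have "2 * \<bar>D j * D k\<bar> \<le> (D j)\<^sup>2 + (D k)\<^sup>2" using sq ex by linarith
    then have "(2 * \<bar>D j * D k\<bar>) * \<rho>\<^sup>2 \<le> ((D j)\<^sup>2 + (D k)\<^sup>2) * \<rho>\<^sup>2"
      by (rule mult_right_mono) simp
    then have "2 * (\<bar>D j * D k\<bar> * \<rho>\<^sup>2) \<le> (D j)\<^sup>2 * \<rho>\<^sup>2 + (D k)\<^sup>2 * \<rho>\<^sup>2"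
      by (simp add: algebra_simps)
    then have "\<bar>D j * D k\<bar> * \<rho>\<^sup>2 \<le> V2"
      using v2[of j] v2[of k] by linarith
    then have "\<bar>W j k\<bar> * (\<bar>D j * D k\<bar> * \<rho>\<^sup>2) \<le> B * V2"
      using Wb[of j k] B0 by (intro mult_mono) auto
    then show ?thesis by (simp add: abs_mult mult_ac)
  qed
  have T3: "\<bar>L * v ^ 6\<bar> * \<rho>\<^sup>2 \<le> 3 * B * V3"
  proof -
    have "\<bar>L * v ^ 6\<bar> * \<rho>\<^sup>2 = \<bar>L\<bar> * (v ^ 6 * \<rho>\<^sup>2)" by (simp add: abs_mult power_abs)
    also have "\<dots> \<le> (3 * B) * V3" using Lb v3 B0 by (intro mult_mono) auto
    finally show ?thesis by simp
  qed
  have S: "\<bar>\<Sum>j\<in>UNIV. \<Sum>k\<in>UNIV. D j * D k * W j k\<bar> * \<rho>\<^sup>2 \<le> 9 * (B * V2)"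
  proof -
    have "\<bar>\<Sum>j\<in>UNIV. \<Sum>k\<in>UNIV. D j * D k * W j k\<bar> * \<rho>\<^sup>2 \<le> (\<Sum>j\<in>UNIV. \<Sum>k\<in>UNIV. \<bar>D j * D k * W j k\<bar> * \<rho>\<^sup>2)"
    proof -
      have "\<bar>\<Sum>j\<in>UNIV. \<Sum>k\<in>UNIV. D j * D k * W j k\<bar> \<le> (\<Sum>j\<in>UNIV. \<Sum>k\<in>UNIV. \<bar>D j * D k * W j k\<bar>)"
        by (rule order_trans[OF sum_abs]) (intro sum_mono sum_abs)
      then have "\<bar>\<Sum>j\<in>UNIV. \<Sum>k\<in>UNIV. D j * D k * W j k\<bar> * \<rho>\<^sup>2 \<le> (\<Sum>j\<in>UNIV. \<Sum>k\<in>UNIV. \<bar>D j * D k * W j k\<bar>) * \<rho>\<^sup>2"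
        by (rule mult_right_mono) simp
      also have "\<dots> = (\<Sum>j\<in>UNIV. \<Sum>k\<in>UNIV. \<bar>D j * D k * W j k\<bar> * \<rho>\<^sup>2)"
        by (simp add: sum_distrib_right)
      finally show ?thesis .
    qed
    also have "\<dots> \<le> (\<Sum>j\<in>(UNIV::3 set). \<Sum>k\<in>(UNIV::3 set). B * V2)"
      by (intro sum_mono T2)
    also have "\<dots> = 9 * (B * V2)" by simp
    finally show ?thesis .
  qed
  have "\<bar>- LL * v\<^sup>2 + 4 * (\<Sum>j\<in>UNIV. \<Sum>k\<in>UNIV. D j * D k * W j k) - 4/3 * L * v ^ 6\<bar> * \<rho>\<^sup>2
     \<le> (\<bar>LL * v\<^sup>2\<bar> + 4 * \<bar>\<Sum>j\<in>UNIV. \<Sum>k\<in>UNIV. D j * D k * W j k\<bar> + 4/3 * \<bar>L * v ^ 6\<bar>) * \<rho>\<^sup>2"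
  proof (rule mult_right_mono)
    have tri: "\<bar>- X + 4 * S - 4/3 * Y\<bar> \<le> \<bar>X\<bar> + 4 * \<bar>S\<bar> + 4/3 * \<bar>Y\<bar>" for X S Y :: real
      by arith
    show "\<bar>- LL * v\<^sup>2 + 4 * (\<Sum>j\<in>UNIV. \<Sum>k\<in>UNIV. D j * D k * W j k) - 4/3 * L * v ^ 6\<bar>
      \<le> \<bar>LL * v\<^sup>2\<bar> + 4 * \<bar>\<Sum>j\<in>UNIV. \<Sum>k\<in>UNIV. D j * D k * W j k\<bar> + 4/3 * \<bar>L * v ^ 6\<bar>"
      using tri[of "LL * v\<^sup>2" "\<Sum>j\<in>UNIV. \<Sum>k\<in>UNIV. D j * D k * W j k" "L * v ^ 6"] by (simp add: mult.assoc)
  qed simp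
  also have "\<dots> = \<bar>LL * v\<^sup>2\<bar> * \<rho>\<^sup>2 + 4 * (\<bar>\<Sum>j\<in>UNIV. \<Sum>k\<in>UNIV. D j * D k * W j k\<bar> * \<rho>\<^sup>2) + 4/3 * (\<bar>L * v ^ 6\<bar> * \<rho>\<^sup>2)"
    by (simp add: algebra_simps)
  also have "\<dots> \<le> A * V1 + 4 * (9 * (B * V2)) + 4/3 * (3 * B * V3)"
    using T1 S T3 by linarith
  finally show ?thesis by simp
qed

definition mm :: "real \<Rightarrow> real" where "mm lam = min 1 (cc lam)"

lemma v_bounds:
  fixes x :: R3
  assumes lam: "lam > 0"
  defines "\<rho> \<equiv> 1 + x \<bullet> x"
  shows "(vf lam x)\<^sup>2 * \<rho> \<le> lam / mm lam"
    and "(Df lam k x)\<^sup>2 * \<rho>\<^sup>2 \<le> lam * (cc lam)\<^sup>2 / (mm lam) ^ 3"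
    and "(vf lam x) ^ 6 * \<rho>\<^sup>2 \<le> lam ^ 3 / (mm lam) ^ 3"
proof -
  have c0: "cc lam > 0" using lam by (simp add: cc_def)
  have m0: "mm lam > 0" using c0 by (simp add: mm_def)
  have r1: "\<rho> \<ge> 1" unfolding \<rho>_def by (simp add: inner_ge_zero)
  have xx: "x \<bullet> x \<ge> 0" by simp
  have qm: "mm lam * \<rho> \<le> qf lam x"
  proof -
    have "mm lam \<le> 1" "mm lam \<le> cc lam" by (auto simp: mm_def)
    then have "mm lam * (x \<bullet> x) \<le> cc lam * (x \<bullet> x)" using xx by (intro mult_right_mono) auto
    then show ?thesis using \<open>mm lam \<le> 1\<close> by (simp add: \<rho>_def qf_def distrib_left)
  qed
  have q1: "qf lam x \<ge> 1" by (rule qf_pos)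
  have ip2: "(ip lam x)\<^sup>2 * qf lam x = 1" using q1 by (simp add: ip_def power2_eq_square)
  have ipq3: "(ip lam x) ^ 6 * (qf lam x) ^ 3 = 1"
  proof -
    have "(ip lam x) ^ 6 * (qf lam x) ^ 3 = ((ip lam x)\<^sup>2 * qf lam x) ^ 3"
      by (simp add: power_mult_distrib power_mult[symmetric])
    then show ?thesis using ip2 by simp
  qed
  have sl: "(sqrt lam)\<^sup>2 = lam" using lam by simp
  have e1: "(vf lam x)\<^sup>2 * qf lam x = lam"
    unfolding vf_def power_mult_distrib using ip2 sl by (simp add: mult.assoc)
  have e2: "(Df lam k x)\<^sup>2 * (qf lam x) ^ 3 = lam * (cc lam)\<^sup>2 * (x $ k)\<^sup>2"
  proof -
    have "(Df lam k x)\<^sup>2 * (qf lam x) ^ 3 = (sqrt lam)\<^sup>2 * (cc lam)\<^sup>2 * (x $ k)\<^sup>2 * ((ip lam x) ^ 6 * (qf lam x) ^ 3)"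
      unfolding Df_def by (simp add: power_mult_distrib power_mult[symmetric] mult_ac)
    then show ?thesis using ipq3 sl by simp
  qed
  have e3: "(vf lam x) ^ 6 * (qf lam x) ^ 3 = lam ^ 3"
  proof -
    have "(vf lam x) ^ 6 * (qf lam x) ^ 3 = ((sqrt lam)\<^sup>2) ^ 3 * ((ip lam x) ^ 6 * (qf lam x) ^ 3)"
      unfolding vf_def by (simp add: power_mult_distrib power_mult[symmetric] mult_ac)
    then show ?thesis using ipq3 sl by simp
  qed
  have xk: "(x $ k)\<^sup>2 \<le> \<rho>"
  proof -
    have "(x $ k)\<^sup>2 \<le> x \<bullet> x"
      using member_le_sum[of k UNIV "\<lambda>i. x $ i * x $ i"] by (simp add: inner_vec_def power2_eq_square)
    then show ?thesis unfolding \<rho>_def by simp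
  qed
  have mr: "0 \<le> mm lam * \<rho>" using m0 r1 by simp
  show "(vf lam x)\<^sup>2 * \<rho> \<le> lam / mm lam"
  proof -
    have "(vf lam x)\<^sup>2 * (mm lam * \<rho>) \<le> (vf lam x)\<^sup>2 * qf lam x"
      using qm by (intro mult_left_mono) auto
    then have "mm lam * ((vf lam x)\<^sup>2 * \<rho>) \<le> lam" using e1 by (simp add: mult_ac)
    then show ?thesis using m0 by (simp add: field_simps)
  qed
  show "(Df lam k x)\<^sup>2 * \<rho>\<^sup>2 \<le> lam * (cc lam)\<^sup>2 / (mm lam) ^ 3"
  proof -
    have "(Df lam k x)\<^sup>2 * (mm lam * \<rho>) ^ 3 \<le> (Df lam k x)\<^sup>2 * (qf lam x) ^ 3"
      using qm mr by (intro mult_left_mono power_mono) auto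
    also have "\<dots> \<le> lam * (cc lam)\<^sup>2 * \<rho>"
      unfolding e2 using xk lam by (intro mult_left_mono) auto
    finally have "((mm lam) ^ 3 * ((Df lam k x)\<^sup>2 * \<rho>\<^sup>2)) * \<rho> \<le> (lam * (cc lam)\<^sup>2) * \<rho>"
      by (simp add: power_mult_distrib power3_eq_cube power2_eq_square mult_ac)
    then have "(mm lam) ^ 3 * ((Df lam k x)\<^sup>2 * \<rho>\<^sup>2) \<le> lam * (cc lam)\<^sup>2"
      using r1 by (simp add: mult_le_cancel_right)
    then show ?thesis using m0 by (simp add: field_simps)
  qed
  show "(vf lam x) ^ 6 * \<rho>\<^sup>2 \<le> lam ^ 3 / (mm lam) ^ 3"
  proof -
    have "(vf lam x) ^ 6 * (mm lam * \<rho>) ^ 3 \<le> (vf lam x) ^ 6 * (qf lam x) ^ 3"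
      using qm mr by (intro mult_left_mono power_mono) (auto simp: zero_le_even_power)
    also have "\<dots> = lam ^ 3" by (rule e3)
    finally have a: "(mm lam) ^ 3 * ((vf lam x) ^ 6 * \<rho>\<^sup>2) * \<rho> \<le> lam ^ 3"
      by (simp add: power_mult_distrib power3_eq_cube power2_eq_square mult_ac)
    have nn: "0 \<le> (mm lam) ^ 3 * ((vf lam x) ^ 6 * \<rho>\<^sup>2)"
      using m0 by (simp add: zero_le_even_power)
    have "(mm lam) ^ 3 * ((vf lam x) ^ 6 * \<rho>\<^sup>2) \<le> (mm lam) ^ 3 * ((vf lam x) ^ 6 * \<rho>\<^sup>2) * \<rho>"
      using mult_left_mono[OF r1 nn] by simp
    then have "(mm lam) ^ 3 * ((vf lam x) ^ 6 * \<rho>\<^sup>2) \<le> lam ^ 3" using a by linarith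
    then show ?thesis using m0 by (simp add: field_simps)
  qed
qed


lemma wR_bounds:
  assumes phi: "admissible_phi \<phi>"
  obtains B2 B4 where "B2 \<ge> 0" "B4 \<ge> 0"
    "\<And>R x j k. R \<ge> 1 \<Longrightarrow> \<bar>pd j (pd k (wR \<phi> R)) x\<bar> \<le> B2"
    "\<And>R x. R \<ge> 1 \<Longrightarrow> \<bar>laplacian (laplacian (wR \<phi> R)) x\<bar> * (1 + x \<bullet> x) \<le> B4"
proof -
  have sphi: "smooth \<phi>" using phi by (simp add: admissible_phi_def)
  have "\<forall>js. \<exists>C. \<forall>x. x \<noteq> 0 \<longrightarrow> \<bar>pdl js \<phi> x\<bar> \<le> C * norm x powr (2 - real (length js))"
    using phi by (simp add: admissible_phi_def)
  then obtain Cf where Cf: "\<And>js x. x \<noteq> 0 \<Longrightarrow> \<bar>pdl js \<phi> x\<bar> \<le> Cf js * norm x powr (2 - real (length js))"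
    by metis
  define B2 where "B2 = 2 + (\<Sum>a\<in>UNIV. \<Sum>b\<in>UNIV. \<bar>Cf [a, b]\<bar>)"
  define B4 where "B4 = 2 * (\<Sum>a\<in>UNIV. \<Sum>b\<in>UNIV. \<bar>Cf [a, a, b, b]\<bar>)"
  have S2: "\<bar>Cf [j, k]\<bar> \<le> (\<Sum>a\<in>UNIV. \<Sum>b\<in>UNIV. \<bar>Cf [a, b]\<bar>)" for j k
  proof -
    have "\<bar>Cf [j, k]\<bar> \<le> (\<Sum>b\<in>UNIV. \<bar>Cf [j, b]\<bar>)"
      by (rule member_le_sum[of k UNIV "\<lambda>b. \<bar>Cf [j, b]\<bar>"]) auto
    also have "\<dots> \<le> (\<Sum>a\<in>UNIV. \<Sum>b\<in>UNIV. \<bar>Cf [a, b]\<bar>)"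
      by (rule member_le_sum[of j UNIV "\<lambda>a. \<Sum>b\<in>UNIV. \<bar>Cf [a, b]\<bar>"]) (auto intro: sum_nonneg)
    finally show ?thesis .
  qed
  have B4nn: "B4 \<ge> 0" unfolding B4_def by (auto intro!: sum_nonneg)
  show ?thesis
  proof
    show "B2 \<ge> 0" unfolding B2_def by (auto intro!: add_nonneg_nonneg sum_nonneg)
    show "B4 \<ge> 0" by (rule B4nn)
  next
    fix R :: real and x :: R3 and j k assume R: "R \<ge> 1"
    show "\<bar>pd j (pd k (wR \<phi> R)) x\<bar> \<le> B2"
    proof (cases "norm x < R")
      case True
      then show ?thesis using wR_pdpd_local[OF phi _ True, of j k] R
        by (auto simp: B2_def intro!: add_increasing2 sum_nonneg)
    next
      case False
      then have x0: "x \<noteq> 0" using R by auto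
      have "\<bar>pdl [j, k] (wR \<phi> R) x\<bar> \<le> Cf [j, k] * norm x powr (2 - real (length [j, k]))"
        by (rule wR_pdl_bound[OF phi _ x0 Cf]) (use R in auto)
      then have "\<bar>pd j (pd k (wR \<phi> R)) x\<bar> \<le> Cf [j, k]" using x0 by simp
      then show ?thesis using S2[of j k] unfolding B2_def by linarith
    qed
  next
    fix R :: real and x :: R3 assume R: "R \<ge> 1"
    show "\<bar>laplacian (laplacian (wR \<phi> R)) x\<bar> * (1 + x \<bullet> x) \<le> B4"
    proof (cases "norm x < R")
      case True
      then show ?thesis using wR_laplap_local[OF phi _ True] R B4nn by auto
    next
      case False
      then have x0: "x \<noteq> 0" and x1: "norm x \<ge> 1" using R by auto
      have n2: "(norm x)\<^sup>2 > 0" using x0 by simp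
      have b: "\<bar>pdl [j, j, k, k] (wR \<phi> R) x\<bar> \<le> \<bar>Cf [j, j, k, k]\<bar> / (norm x)\<^sup>2" for j k
      proof -
        have "\<bar>pdl [j, j, k, k] (wR \<phi> R) x\<bar> \<le> Cf [j, j, k, k] * norm x powr (2 - real (length [j, j, k, k]))"
          by (rule wR_pdl_bound[OF phi _ x0 Cf]) (use R in auto)
        also have "norm x powr (2 - real (length [j, j, k, k])) = 1 / (norm x)\<^sup>2"
        proof -
          have "norm x powr (2 - real (length [j, j, k, k])) = norm x powr (- 2)" by simp
          also have "\<dots> = inverse (norm x powr 2)" by (rule powr_minus)
          also have "norm x powr 2 = (norm x)\<^sup>2" using x0 by (simp add: powr_realpow)
          finally show ?thesis by (simp add: inverse_eq_divide)
        qed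
        finally have c: "\<bar>pdl [j, j, k, k] (wR \<phi> R) x\<bar> \<le> Cf [j, j, k, k] * (1 / (norm x)\<^sup>2)" .
        have "Cf [j, j, k, k] * (1 / (norm x)\<^sup>2) \<le> \<bar>Cf [j, j, k, k]\<bar> * (1 / (norm x)\<^sup>2)"
          using n2 by (intro mult_right_mono) auto
        then show ?thesis using c by simp
      qed
      have sw: "smooth (wR \<phi> R)" using smooth_wR[OF _ ] phi R by (auto simp: admissible_phi_def)
      have "\<bar>laplacian (laplacian (wR \<phi> R)) x\<bar> \<le> (\<Sum>j\<in>UNIV. \<Sum>k\<in>UNIV. \<bar>Cf [j, j, k, k]\<bar> / (norm x)\<^sup>2)"
        unfolding laplap_sum[OF sw]
        by (rule order_trans[OF sum_abs], rule sum_mono, rule order_trans[OF sum_abs], rule sum_mono, rule b)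
      also have "\<dots> = (\<Sum>j\<in>UNIV. \<Sum>k\<in>UNIV. \<bar>Cf [j, j, k, k]\<bar>) / (norm x)\<^sup>2"
        by (simp add: sum_divide_distrib)
      finally have a: "\<bar>laplacian (laplacian (wR \<phi> R)) x\<bar> * (norm x)\<^sup>2 \<le> (\<Sum>j\<in>UNIV. \<Sum>k\<in>UNIV. \<bar>Cf [j, j, k, k]\<bar>)"
        using n2 by (simp add: field_simps)
      have "1 + x \<bullet> x \<le> 2 * (norm x)\<^sup>2"
      proof -
        have "(norm x)\<^sup>2 \<ge> 1" using x1 by (simp add: one_le_power)
        moreover have "x \<bullet> x = (norm x)\<^sup>2" by (simp add: power2_norm_eq_inner)
        ultimately show ?thesis by linarith
      qed
      then have "\<bar>laplacian (laplacian (wR \<phi> R)) x\<bar> * (1 + x \<bullet> x) \<le> \<bar>laplacian (laplacian (wR \<phi> R)) x\<bar> * (2 * (norm x)\<^sup>2)"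
        by (intro mult_left_mono) auto
      also have "\<dots> \<le> B4" using a unfolding B4_def by linarith
      finally show ?thesis .
    qed
  qed
qed


lemma Hm_nonneg: "Hm y \<ge> 0" unfolding Hm_def by (intro prod_nonneg) (auto intro: h1_nonneg)

lemma bound_by_Hm:
  assumes "X * (1 + y \<bullet> y)\<^sup>2 \<le> K" "K \<ge> 0"
  shows "X \<le> 36 * K * Hm y"
proof -
  have r1: "1 + y \<bullet> y > 0" by (simp add: add_pos_nonneg)
  then have r: "(1 + y \<bullet> y)\<^sup>2 > 0" by simp
  have "X \<le> K * (1 / (1 + y \<bullet> y)\<^sup>2)" using assms(1) r r1 by (simp add: field_simps)
  also have "\<dots> \<le> K * (36 * Hm y)" using Hm_bound[of y] assms(2) by (intro mult_left_mono) auto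
  finally show ?thesis by simp
qed

lemma meas_cont: "continuous_on UNIV (f :: R3 \<Rightarrow> real) \<Longrightarrow> f \<in> borel_measurable lborel"
  using borel_measurable_continuous_onI by simp

lemma infinite_case:
  assumes phi: "admissible_phi \<phi>" and lam: "lam > 0"
  shows "8 * ((LINT x|lborel. (\<Sum>j\<in>UNIV. (cmod (pd j (\<lambda>y. cis \<theta> * complex_of_real (vf lam y)) x))\<^sup>2))
            - (LINT x|lborel. cmod (cis \<theta> * complex_of_real (vf lam x)) ^ 6)) = 0"
proof -
  have sphi: "smooth \<phi>" using phi by (simp add: admissible_phi_def)
  obtain B2 B4 where B2: "B2 \<ge> 0" and B4: "B4 \<ge> 0"
    and b2: "\<And>R x j k. R \<ge> 1 \<Longrightarrow> \<bar>pd j (pd k (wR \<phi> R)) x\<bar> \<le> B2"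
    and b4: "\<And>R x. R \<ge> 1 \<Longrightarrow> \<bar>laplacian (laplacian (wR \<phi> R)) x\<bar> * (1 + x \<bullet> x) \<le> B4"
    using wR_bounds[OF phi] by blast
  define V1 where "V1 = lam / mm lam"
  define V2 where "V2 = lam * (cc lam)\<^sup>2 / (mm lam) ^ 3"
  define V3 where "V3 = lam ^ 3 / (mm lam) ^ 3"
  have m0: "mm lam > 0" using lam by (simp add: mm_def cc_def)
  have V: "V1 \<ge> 0" "V2 \<ge> 0" "V3 \<ge> 0" using lam m0 by (auto simp: V1_def V2_def V3_def)
  note vb = v_bounds[OF lam, folded V1_def V2_def V3_def]
  define g1 where "g1 x = (\<Sum>j\<in>UNIV. (Df lam j x)\<^sup>2)" for x
  define g2 where "g2 x = vf lam x ^ 6" for x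
  define fl where "fl x = 8 * g1 x - 8 * g2 x" for x
  have cg1: "continuous_on UNIV g1" unfolding g1_def[abs_def]
    by (intro continuous_on_sum continuous_on_power cont_Df)
  have cg2: "continuous_on UNIV g2" unfolding g2_def[abs_def]
    by (intro continuous_on_power cont_vf)
  have ig1: "integrable lborel g1"
  proof (rule Bochner_Integration.integrable_bound[OF integrable_mult_right[OF Hm_integrable, of "36 * (3 * V2)"]])
    show "g1 \<in> borel_measurable lborel" by (rule meas_cont[OF cg1])
    show "AE x in lborel. norm (g1 x) \<le> norm (36 * (3 * V2) * Hm x)"
    proof (rule AE_I2)
      fix x :: R3
      have "g1 x * (1 + x \<bullet> x)\<^sup>2 = (\<Sum>j\<in>UNIV. (Df lam j x)\<^sup>2 * (1 + x \<bullet> x)\<^sup>2)"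
        by (simp add: g1_def sum_distrib_right)
      also have "\<dots> \<le> (\<Sum>j\<in>(UNIV::3 set). V2)" by (intro sum_mono vb(2))
      finally have "g1 x \<le> 36 * (3 * V2) * Hm x" by (intro bound_by_Hm) (use V in auto)
      moreover have "g1 x \<ge> 0" by (simp add: g1_def sum_nonneg)
      ultimately show "norm (g1 x) \<le> norm (36 * (3 * V2) * Hm x)" using Hm_nonneg[of x] V by simp
    qed
  qed
  have ig2: "integrable lborel g2"
  proof (rule Bochner_Integration.integrable_bound[OF integrable_mult_right[OF Hm_integrable, of "36 * V3"]])
    show "g2 \<in> borel_measurable lborel" by (rule meas_cont[OF cg2])
    show "AE x in lborel. norm (g2 x) \<le> norm (36 * V3 * Hm x)"
    proof (rule AE_I2)
      fix x :: R3
      have "g2 x \<le> 36 * V3 * Hm x" by (intro bound_by_Hm) (use V vb(3) in \<open>auto simp: g2_def\<close>)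
      moreover have "g2 x \<ge> 0" by (simp add: g2_def zero_le_even_power)
      ultimately show "norm (g2 x) \<le> norm (36 * V3 * Hm x)" using Hm_nonneg[of x] V by simp
    qed
  qed
  define s where "s n x = Ifun (wR \<phi> (real (Suc n))) lam x" for n x
  define K where "K = B4 * V1 + 36 * B2 * V2 + 4 * B2 * V3"
  have K0: "K \<ge> 0" using B2 B4 V by (simp add: K_def)
  have sw: "smooth (wR \<phi> (real (Suc n)))" for n by (rule smooth_wR[OF sphi]) simp
  have cs: "continuous_on UNIV (s n)" for n
  proof -
    note sl = smooth_laplacian[OF sw[of n]]
    have c1: "continuous_on UNIV (laplacian (laplacian (wR \<phi> (real (Suc n)))))"
      by (rule smooth_cont[OF smooth_laplacian[OF sl]])
    have c2: "continuous_on UNIV (laplacian (wR \<phi> (real (Suc n))))" by (rule smooth_cont[OF sl])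
    have c3: "continuous_on UNIV (pd j (pd k (wR \<phi> (real (Suc n)))))" for j k
      by (rule smooth_cont[OF smooth_pd[OF smooth_pd[OF sw]]])
    show ?thesis unfolding s_def[abs_def] Ifun_def
      by (intro continuous_on_add continuous_on_diff continuous_on_mult continuous_on_const continuous_on_power
         continuous_on_sum continuous_on_minus c1 c2 c3 cont_vf cont_Df)
  qed
  have sbound: "\<bar>s n x\<bar> \<le> 36 * K * Hm x" for n x
  proof (rule bound_by_Hm[OF _ K0])
    have R1: "real (Suc n) \<ge> 1" by simp
    have lapb: "\<bar>laplacian (wR \<phi> (real (Suc n))) x\<bar> \<le> 3 * B2"
    proof -
      have "\<bar>laplacian (wR \<phi> (real (Suc n))) x\<bar> \<le> (\<Sum>j\<in>(UNIV::3 set). \<bar>pd j (pd j (wR \<phi> (real (Suc n)))) x\<bar>)"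
        unfolding laplacian_def by (rule sum_abs)
      also have "\<dots> \<le> (\<Sum>j\<in>(UNIV::3 set). B2)" by (intro sum_mono b2[OF R1])
      finally show ?thesis by simp
    qed
    show "\<bar>s n x\<bar> * (1 + x \<bullet> x)\<^sup>2 \<le> K"
      unfolding s_def Ifun_def K_def
      by (rule Ibound[OF _ b4[OF R1] b2[OF R1] lapb vb(1) vb(2) vb(3)]) (simp add: inner_ge_zero)
  qed
  have slim: "(\<lambda>n. s n x) \<longlonglongrightarrow> fl x" for x
  proof (rule tendsto_eventually)
    obtain N :: nat where N: "norm x < real N" using reals_Archimedean2 by blast
    show "\<forall>\<^sub>F n in sequentially. s n x = fl x"
    proof (rule eventually_sequentiallyI[of N])
      fix n assume "N \<le> n"
      then have xn: "norm x < real (Suc n)" using N by linarith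
      have R0: "real (Suc n) > 0" by simp
      have "s n x = - 0 * (vf lam x)\<^sup>2
          + 4 * (\<Sum>j\<in>UNIV. \<Sum>k\<in>UNIV. Df lam j x * Df lam k x * (2 * (if j = k then 1 else 0)))
          - 4/3 * 6 * vf lam x ^ 6"
        unfolding s_def Ifun_def wR_laplap_local[OF phi R0 xn] wR_lap_local[OF phi R0 xn]
          wR_pdpd_local[OF phi R0 xn] by simp
      also have "\<dots> = fl x"
        by (simp add: fl_def g1_def g2_def if_distrib sum_distrib_left power2_eq_square sum.delta)
      finally show "s n x = fl x" .
    qed
  qed
  have "(\<lambda>n. integral\<^sup>L lborel (s n)) \<longlonglongrightarrow> integral\<^sup>L lborel fl"
  proof (rule integral_dominated_convergence[where w="\<lambda>x. 36 * K * Hm x"])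
    show "fl \<in> borel_measurable lborel" unfolding fl_def[abs_def] using ig1 ig2 by auto
    show "s n \<in> borel_measurable lborel" for n by (rule meas_cont[OF cs])
    show "integrable lborel (\<lambda>x. 36 * K * Hm x)" by (intro integrable_mult_right Hm_integrable)
    show "AE x in lborel. (\<lambda>n. s n x) \<longlonglongrightarrow> fl x" using slim by simp
    show "AE x in lborel. norm (s n x) \<le> 36 * K * Hm x" for n using sbound by simp
  qed
  moreover have "integral\<^sup>L lborel (s n) = 0" for n
    unfolding s_def by (rule finite_Ifun[OF phi _ lam]) simp
  ultimately have fl0: "integral\<^sup>L lborel fl = 0" using LIMSEQ_unique by (simp add: LIMSEQ_const_iff)
  have "integral\<^sup>L lborel fl = 8 * integral\<^sup>L lborel g1 - 8 * integral\<^sup>L lborel g2"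
    unfolding fl_def[abs_def] using ig1 ig2 by simp
  moreover have "(LINT x|lborel. (\<Sum>j\<in>UNIV. (cmod (pd j (\<lambda>y. cis \<theta> * complex_of_real (vf lam y)) x))\<^sup>2)) = integral\<^sup>L lborel g1"
    unfolding pd_u cm_cis g1_def by simp
  moreover have "(LINT x|lborel. cmod (cis \<theta> * complex_of_real (vf lam x)) ^ 6) = integral\<^sup>L lborel g2"
    unfolding cm_cis g2_def by (simp add: power_abs)
  ultimately show ?thesis using fl0 by simp
qed


theorem lemma2p5:
  fixes \<phi> :: "R3 \<Rightarrow> real" and R :: ereal and \<theta> lam :: real
  assumes "admissible_phi \<phi>" and "1 \<le> R" and "lam > 0"
  shows "Fc \<phi> R (\<lambda>x. cis \<theta> * complex_of_real (sqrt lam * W (lam *\<^sub>R x))) = 0"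
proof -
  have u: "(\<lambda>x. cis \<theta> * complex_of_real (sqrt lam * W (lam *\<^sub>R x))) = (\<lambda>x. cis \<theta> * complex_of_real (vf lam x))"
    by (simp add: vf_W[OF assms(3)])
  show ?thesis
  proof (cases "R = \<infinity>")
    case True
    then show ?thesis unfolding u Fc_def using infinite_case[OF assms(1,3)] by simp
  next
    case False
    then obtain r where r: "R = ereal r" using assms(2) by (cases R) auto
    then have r1: "r \<ge> 1" using assms(2) by simp
    have "Fc \<phi> R (\<lambda>x. cis \<theta> * complex_of_real (vf lam x)) = (LINT x|lborel. Ifun (wR \<phi> r) lam x)"
      unfolding Fc_def r Let_def using integrand_eq by simp
    also have "\<dots> = 0" by (rule finite_Ifun[OF assms(1) _ assms(3)]) (use r1 in simp)
    finally show ?thesis unfolding u .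
  qed
qed


end
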